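(* Let $\mathcal A$ and $\mathcal B$ be complete NFAs over the same finite alphabet $\Sigma$. Then $\mathcal L(\mathcal B)\subseteq\mathcal L(\mathcal A)$ if and only if $\mathcal L(\mathcal B_f)\subseteq\mathcal L(\mathcal A_f)$, where $\mathcal A_f,\mathcal B_f$ are the NBWs obtained by the construction below.
   Context: An NFA $\mathcal A=(\Sigma,Q,q_0,\delta,F)$ (with $\delta:Q\times\Sigma\to 2^Q$) is complete if $\delta(q,\sigma)\neq\emptyset$ for all $q,\sigma$; $\mathcal L(\mathcal A)\subseteq\Sigma^*$ is its language of finite words. An NBW is the same kind of tuple read on infinite words, accepting a word if some run visits a final state infinitely often. For a complete NFA $\mathcal A=(\Sigma,Q,q_0,\delta,F)$, the NBW $\mathcal A_f=(\Sigma_\$,Q\cup\{f\},q_0,\delta_f,\{f\})$ is defined with a fresh letter $\$\notin\Sigma$, $\Sigma_\$=\Sigma\cup\{\$\}$, a fresh state $f\notin Q$, and: $\delta_f(q,\sigma)=\delta(q,\sigma)$ for $q\in Q,\sigma\in\Sigma$; $\delta_f(q,\$)=\{f\}$ for $q\in F$; $\delta_f(q,\$)=\{q_0\}$ for $q\in Q\setminus F$; and $\delta_f(f,\sigma)=\delta_f(q_0,\sigma)$ for all $\sigma\in\Sigma_\$$. *)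

theory Defs
  imports Main
begin

record ('a, 'q) automaton =
  alphabet :: "'a set"
  states   :: "'q set"
  init     :: "'q"
  trans    :: "'q \<Rightarrow> 'a \<Rightarrow> 'q set"
  final    :: "'q set"

definition wf_automaton :: "('a, 'q) automaton \<Rightarrow> bool" where
  "wf_automaton A \<longleftrightarrow>
     finite (alphabet A) \<and> finite (states A) \<and> init A \<in> states A \<and>
     final A \<subseteq> states A \<and>
     (\<forall>q \<in> states A. \<forall>a \<in> alphabet A. trans A q a \<subseteq> states A)"

definition complete :: "('a, 'q) automaton \<Rightarrow> bool" where
  "complete A \<longleftrightarrow> (\<forall>q \<in> states A. \<forall>a \<in> alphabet A. trans A q a \<noteq> {})"

fun reach :: "('q \<Rightarrow> 'a \<Rightarrow> 'q set) \<Rightarrow> 'q set \<Rightarrow> 'a list \<Rightarrow> 'q set" where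
  "reach d S [] = S"
| "reach d S (a # w) = reach d (\<Union>q\<in>S. d q a) w"

definition nfa_lang :: "('a, 'q) automaton \<Rightarrow> 'a list set" where
  "nfa_lang A = {w. set w \<subseteq> alphabet A \<and> reach (trans A) {init A} w \<inter> final A \<noteq> {}}"

definition nbw_lang :: "('a, 'q) automaton \<Rightarrow> (nat \<Rightarrow> 'a) set" where
  "nbw_lang A = {w. (\<forall>i. w i \<in> alphabet A) \<and>
      (\<exists>r. r 0 = init A \<and> (\<forall>i. r (Suc i) \<in> trans A (r i) (w i)) \<and>
           (\<exists>\<^sub>\<infinity> i. r i \<in> final A))}"

text \<open>The construction A_f. The letter \$ is None, letters of Sigma are Some a;
  the fresh state f is None, states of Q are Some q.\<close>
fun trans_fQ :: "('a, 'q) automaton \<Rightarrow> 'q \<Rightarrow> 'a option \<Rightarrow> 'q option set" where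
  "trans_fQ A q (Some a) = Some ` trans A q a"
| "trans_fQ A q None = (if q \<in> final A then {None} else {Some (init A)})"

fun trans_f :: "('a, 'q) automaton \<Rightarrow> 'q option \<Rightarrow> 'a option \<Rightarrow> 'q option set" where
  "trans_f A (Some q) x = trans_fQ A q x"
| "trans_f A None x = trans_fQ A (init A) x"

definition dollar_nbw :: "('a, 'q) automaton \<Rightarrow> ('a option, 'q option) automaton" where
  "dollar_nbw A = \<lparr> alphabet = insert None (Some ` alphabet A),
                    states = insert None (Some ` states A),
                    init = Some (init A),
                    trans = trans_f A,
                    final = {None} \<rparr>"

end

theory Submission
  imports Defs
begin

lemma INFM_nat_iff: "(\<exists>\<^sub>\<infinity> i. P (i::nat)) \<longleftrightarrow> (\<forall>m. \<exists>n>m. P n)"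
proof -
  have "(\<exists>\<^sub>\<infinity> i. P (i::nat)) \<longleftrightarrow> \<not> (\<exists>m. \<forall>n\<in>{x. P x}. n \<le> m)"
    by (simp add: frequently_cofinite finite_nat_set_iff_bounded_le)
  then show ?thesis by (auto simp: not_le)
qed

definition nrm :: "('a,'q) automaton \<Rightarrow> 'q option \<Rightarrow> 'q" where
  "nrm X x = (case x of None \<Rightarrow> init X | Some q \<Rightarrow> q)"

lemma tf_Some: "trans_f X x (Some a) = Some ` trans X (nrm X x) a"
  by (cases x) (auto simp: nrm_def)

lemma tf_None: "trans_f X x None = (if nrm X x \<in> final X then {None} else {Some (init X)})"
  by (cases x) (auto simp: nrm_def)

lemma nbw_dollar: "w \<in> nbw_lang (dollar_nbw X) \<longleftrightarrow>
   (\<forall>i. w i \<in> insert None (Some ` alphabet X)) \<and>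
   (\<exists>r. r 0 = Some (init X) \<and> (\<forall>i. r (Suc i) \<in> trans_f X (r i) (w i)) \<and> (\<exists>\<^sub>\<infinity> i. r i = None))"
  by (simp add: nbw_lang_def dollar_nbw_def)

inductive good :: "('q \<Rightarrow> 'a \<Rightarrow> 'q set) \<Rightarrow> 'q set \<Rightarrow> (nat \<Rightarrow> 'a option) \<Rightarrow> nat \<Rightarrow> 'q \<Rightarrow> bool"
  for d F w where
  gN: "w i = None \<Longrightarrow> q \<in> F \<Longrightarrow> good d F w i q"
| gS: "w i = Some a \<Longrightarrow> q' \<in> d q a \<Longrightarrow> good d F w (Suc i) q' \<Longrightarrow> good d F w i q"

lemma reach_union: "reach d S u = (\<Union>q\<in>S. reach d {q} u)"
proof (induction u arbitrary: S)
  case Nil then show ?case by simp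
next
  case (Cons a u)
  show ?case
    apply simp
    apply (subst Cons.IH)
    apply (subst (2) Cons.IH)
    by blast
qed

lemma reach_mono: "S \<subseteq> T \<Longrightarrow> reach d S u \<subseteq> reach d T u"
  by (subst (1 2) reach_union) blast

lemma good_Some_inv: "good d F w i q \<Longrightarrow> w i = Some a \<Longrightarrow> \<exists>q'\<in>d q a. good d F w (Suc i) q'"
  by (erule good.cases) auto

lemma good_None_inv: "good d F w i q \<Longrightarrow> w i = None \<Longrightarrow> q \<in> F"
  by (erule good.cases) auto

lemma good_list: "w (i + length u) = None \<Longrightarrow> (\<forall>m<length u. w (i+m) = Some (u!m)) \<Longrightarrow>
   good d F w i q \<longleftrightarrow> reach d {q} u \<inter> F \<noteq> {}"
proof (induction u arbitrary: i q)
  case Nil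
  then have wi: "w i = None" by simp
  show ?case
  proof
    assume "good d F w i q"
    then show "reach d {q} [] \<inter> F \<noteq> {}"
    proof cases
      case gN then show ?thesis by simp
    next
      case (gS a' q') with wi show ?thesis by simp
    qed
  next
    assume "reach d {q} [] \<inter> F \<noteq> {}"
    then have "q \<in> F" by simp
    with wi show "good d F w i q" by (rule gN)
  qed
next
  case (Cons a u)
  have wi: "w i = Some a" using Cons.prems(2)[rule_format, of 0] by simp
  have p1: "w (Suc i + length u) = None" using Cons.prems(1) by simp
  have p2: "\<forall>m<length u. w (Suc i + m) = Some (u!m)"
  proof (intro allI impI)
    fix m assume "m < length u"
    then show "w (Suc i + m) = Some (u!m)" using Cons.prems(2)[rule_format, of "Suc m"] by simp
  qed
  have IH: "good d F w (Suc i) q' \<longleftrightarrow> reach d {q'} u \<inter> F \<noteq> {}" for q'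
    by (rule Cons.IH[OF p1 p2])
  have "good d F w i q \<longleftrightarrow> (\<exists>q'\<in>d q a. good d F w (Suc i) q')"
  proof
    assume "good d F w i q"
    then show "\<exists>q'\<in>d q a. good d F w (Suc i) q'"
      using wi by (rule good_Some_inv)
  next
    assume "\<exists>q'\<in>d q a. good d F w (Suc i) q'"
    then obtain q' where "q' \<in> d q a" "good d F w (Suc i) q'" by blast
    with wi show "good d F w i q" by (rule gS)
  qed
  also have "\<dots> \<longleftrightarrow> (\<exists>q'\<in>d q a. reach d {q'} u \<inter> F \<noteq> {})" using IH by simp
  also have "\<dots> \<longleftrightarrow> reach d (d q a) u \<inter> F \<noteq> {}"
    using reach_union[of d "d q a" u] by blast
  finally show ?case by simp
qed

lemma good_ends: "good d F w i q \<Longrightarrow> \<exists>k. w (i+k) = None"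
proof (induction rule: good.induct)
  case (gN i q) then show ?case by (metis add_0_right)
next
  case (gS i a q' q) then show ?case by (metis add_Suc_shift add_Suc_right)
qed

lemma seg_init:
  assumes "\<forall>i. r (Suc i) \<in> trans_f X (r i) (w i)" "w t = None"
  shows "nrm X (r (Suc t)) = init X"
  using assms(1)[rule_format, of t] assms(2)
  by (auto simp: tf_None nrm_def split: if_splits)

lemma dollar_step:
  assumes "\<forall>i. r (Suc i) \<in> trans_f X (r i) (w i)" "r (Suc t) = None"
  shows "w t = None \<and> nrm X (r t) \<in> final X"
  using assms(1)[rule_format, of t] assms(2)
  by (cases "w t") (auto simp: tf_None tf_Some split: if_splits)

lemma run_exists:
  assumes wf: "wf_automaton X" and cp: "complete X"
    and al: "\<forall>i. w i \<in> insert None (Some ` alphabet X)"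
    and inf: "\<forall>i. \<exists>s\<ge>i. (s = 0 \<or> w (s-1) = None) \<and> good (trans X) (final X) w s (init X)"
  shows "w \<in> nbw_lang (dollar_nbw X)"
proof -
  define G where "G i x = good (trans X) (final X) w i (nrm X x)" for i x
  define r where "r = rec_nat (Some (init X))
     (\<lambda>i x. SOME y. y \<in> trans_f X x (w i) \<and> (G i x \<and> w i \<noteq> None \<longrightarrow> G (Suc i) y))"
  have r0: "r 0 = Some (init X)" by (simp add: r_def)
  have rS: "r (Suc i) = (SOME y. y \<in> trans_f X (r i) (w i) \<and> (G i (r i) \<and> w i \<noteq> None \<longrightarrow> G (Suc i) y))" for i
    by (simp add: r_def)
  have ex: "\<exists>y. y \<in> trans_f X x (w i) \<and> (G i x \<and> w i \<noteq> None \<longrightarrow> G (Suc i) y)"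
    if "nrm X x \<in> states X" for i x
  proof (cases "w i")
    case None then show ?thesis by (simp add: tf_None)
  next
    case (Some a)
    with al[rule_format, of i] have a: "a \<in> alphabet X" by auto
    show ?thesis
    proof (cases "G i x")
      case True
      then obtain q' where "q' \<in> trans X (nrm X x) a" "good (trans X) (final X) w (Suc i) q'"
        using good_Some_inv[OF True[unfolded G_def] Some] by blast
      then show ?thesis using Some
        by (intro exI[of _ "Some q'"]) (auto simp: tf_Some G_def nrm_def)
    next
      case False
      from cp that a obtain q' where "q' \<in> trans X (nrm X x) a" unfolding complete_def by blast
      then show ?thesis using Some False
        by (intro exI[of _ "Some q'"]) (auto simp: tf_Some)
    qed
  qed
  have st: "nrm X (r i) \<in> states X" for i
  proof (induction i)
    case 0 then show ?case using wf by (simp add: r0 nrm_def wf_automaton_def)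
  next
    case (Suc i)
    have h: "r (Suc i) \<in> trans_f X (r i) (w i)"
      unfolding rS using someI_ex[OF ex[OF Suc.IH]] by blast
    show ?case
    proof (cases "w i")
      case None then show ?thesis using h wf
        by (auto simp: tf_None nrm_def wf_automaton_def split: if_splits)
    next
      case (Some a)
      with al[rule_format, of i] have a: "a \<in> alphabet X" by auto
      from h Some obtain x where x: "r (Suc i) = Some x" "x \<in> trans X (nrm X (r i)) a"
        by (auto simp: tf_Some)
      have "x \<in> states X" using wf a Suc.IH x(2) unfolding wf_automaton_def by blast
      then show ?thesis using x(1) by (simp add: nrm_def)
    qed
  qed
  have step: "r (Suc i) \<in> trans_f X (r i) (w i) \<and> (G i (r i) \<and> w i \<noteq> None \<longrightarrow> G (Suc i) (r (Suc i)))" for i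
    unfolding rS by (rule someI_ex[OF ex[OF st]])
  have run: "\<forall>i. r (Suc i) \<in> trans_f X (r i) (w i)" using step by blast
  have seg: "nrm X (r s) = init X" if "s = 0 \<or> w (s-1) = None" for s
  proof (cases s)
    case 0 then show ?thesis by (simp add: r0 nrm_def)
  next
    case (Suc t) then show ?thesis using that seg_init[OF run] by simp
  qed
  have endN: "r (Suc i) = None" if "G i (r i)" "w i = None" for i
  proof -
    have g: "good (trans X) (final X) w i (nrm X (r i))" using that(1) unfolding G_def .
    have "nrm X (r i) \<in> final X" by (rule good_None_inv[OF g that(2)])
    moreover have "r (Suc i) \<in> trans_f X (r i) None" using run that(2) by metis
    ultimately show ?thesis by (simp add: tf_None)
  qed
  have fin: "G i (r i) \<Longrightarrow> w (i+k) = None \<Longrightarrow> \<exists>j>i. r j = None" for i k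
  proof (induction k arbitrary: i)
    case 0
    have "r (Suc i) = None" using endN[OF 0(1)] 0(2) by simp
    then show ?case using lessI by blast
  next
    case (Suc k)
    show ?case
    proof (cases "w i = None")
      case True
      have "r (Suc i) = None" by (rule endN[OF Suc.prems(1) True])
      then show ?thesis using lessI by blast
    next
      case False
      have g: "G (Suc i) (r (Suc i))" using step[of i] False Suc.prems(1) by blast
      have "w (Suc i + k) = None" using Suc.prems(2) by simp
      then obtain j where j: "j > Suc i" "r j = None" using Suc.IH[OF g] by blast
      then show ?thesis by (meson Suc_lessD)
    qed
  qed
  have "\<exists>\<^sub>\<infinity> i. r i = None"
    unfolding INFM_nat_iff
  proof
    fix m
    obtain s where s: "s \<ge> m" "s = 0 \<or> w (s-1) = None" "good (trans X) (final X) w s (init X)"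
      using inf by blast
    have gs: "G s (r s)" using s(3) seg[OF s(2)] unfolding G_def by simp
    obtain k where k: "w (s+k) = None" using good_ends[OF s(3)] by blast
    obtain j where "j > s" "r j = None" using fin[OF gs k] by blast
    then show "\<exists>n>m. r n = None" using s(1) by (metis le_less_trans)
  qed
  then show ?thesis unfolding nbw_dollar using al r0 run by blast
qed

lemma run_back:
  assumes run: "\<forall>i. r (Suc i) \<in> trans_f X (r i) (w i)"
  shows "good (trans X) (final X) w (k+d) (nrm X (r (k+d))) \<Longrightarrow>
    \<exists>s. k \<le> s \<and> s \<le> k+d \<and> (s = k \<or> w (s-1) = None) \<and> good (trans X) (final X) w s (nrm X (r s))"
proof (induction d)
  case 0 then show ?case by (intro exI[of _ k]) simp
next
  case (Suc d)
  show ?case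
  proof (cases "w (k+d)")
    case None
    show ?thesis apply (rule exI[of _ "k + Suc d"]) using None Suc.prems by simp
  next
    case (Some a)
    have "r (Suc (k+d)) \<in> Some ` trans X (nrm X (r (k+d))) a"
      using run[rule_format, of "k+d"] Some by (simp add: tf_Some)
    then obtain q' where q': "r (Suc (k+d)) = Some q'" "q' \<in> trans X (nrm X (r (k+d))) a" by blast
    have g1: "good (trans X) (final X) w (Suc (k+d)) q'" using Suc.prems q'(1) by (simp add: nrm_def)
    from Some q'(2) g1 have "good (trans X) (final X) w (k+d) (nrm X (r (k+d)))" by (rule gS)
    from Suc.IH[OF this] obtain s where
      "k \<le> s" "s \<le> k+d" "s = k \<or> w (s-1) = None" "good (trans X) (final X) w s (nrm X (r s))" by blast
    then show ?thesis by (intro exI[of _ s]) simp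
  qed
qed

lemma fwd:
  assumes run: "\<forall>i. r (Suc i) \<in> trans_f X (r i) (w i)"
  shows "(\<forall>m<length u. w (k+m) = Some (u!m)) \<Longrightarrow>
     nrm X (r (k + length u)) \<in> reach (trans X) {nrm X (r k)} u"
proof (induction u arbitrary: k)
  case Nil then show ?case by simp
next
  case (Cons a u)
  have wk: "w k = Some a" using Cons.prems[rule_format, of 0] by simp
  have p: "\<forall>m<length u. w (Suc k + m) = Some (u!m)"
  proof (intro allI impI)
    fix m assume "m < length u"
    then show "w (Suc k + m) = Some (u!m)" using Cons.prems[rule_format, of "Suc m"] by simp
  qed
  have ih: "nrm X (r (Suc k + length u)) \<in> reach (trans X) {nrm X (r (Suc k))} u"
    by (rule Cons.IH[OF p])
  have "r (Suc k) \<in> Some ` trans X (nrm X (r k)) a"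
    using run[rule_format, of k] wk by (simp add: tf_Some)
  then obtain q' where q': "r (Suc k) = Some q'" "q' \<in> trans X (nrm X (r k)) a" by blast
  have eq: "nrm X (r (Suc k)) = q'" using q'(1) by (simp add: nrm_def)
  have sub: "reach (trans X) {q'} u \<subseteq> reach (trans X) (trans X (nrm X (r k)) a) u"
    by (rule reach_mono) (use q'(2) in blast)
  have "nrm X (r (Suc k + length u)) \<in> reach (trans X) (trans X (nrm X (r k)) a) u"
    using ih eq sub by auto
  then show ?case by simp
qed

theorem lemma5:
  fixes A :: "('a, 'q) automaton" and B :: "('a, 'p) automaton"
  assumes "wf_automaton A" and "wf_automaton B"
    and "complete A" and "complete B"
    and "alphabet A = alphabet B"
  shows "nfa_lang B \<subseteq> nfa_lang A \<longleftrightarrow> nbw_lang (dollar_nbw B) \<subseteq> nbw_lang (dollar_nbw A)"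
proof
  assume sub: "nfa_lang B \<subseteq> nfa_lang A"
  show "nbw_lang (dollar_nbw B) \<subseteq> nbw_lang (dollar_nbw A)"
  proof
    fix w assume "w \<in> nbw_lang (dollar_nbw B)"
    then obtain r where al: "\<forall>i. w i \<in> insert None (Some ` alphabet B)"
      and r0: "r 0 = Some (init B)" and run: "\<forall>i. r (Suc i) \<in> trans_f B (r i) (w i)"
      and inf: "\<exists>\<^sub>\<infinity> i. r i = None"
      unfolding nbw_dollar by blast
    have inf': "\<forall>m. \<exists>n>m. r n = None" using inf unfolding INFM_nat_iff .
    have alA: "\<forall>i. w i \<in> insert None (Some ` alphabet A)" using al assms(5) by simp
    have "\<forall>i. \<exists>s\<ge>i. (s = 0 \<or> w (s-1) = None) \<and> good (trans A) (final A) w s (init A)"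
    proof
      fix i
      obtain j1 where j1: "j1 > i" "r j1 = None" using inf' by blast
      obtain j2 where j2: "j2 > j1" "r j2 = None" using inf' by blast
      obtain t1 where t1: "j1 = Suc t1" using j1(1) by (cases j1) auto
      obtain t where t: "j2 = Suc t" using j2(1) by (cases j2) auto
      have wt1: "w t1 = None" using dollar_step[OF run, of t1] j1(2) t1 by simp
      have dt: "w t = None \<and> nrm B (r t) \<in> final B" using dollar_step[OF run, of t] j2(2) t by simp
      from dt have dt1: "w t = None" and dt2: "nrm B (r t) \<in> final B" by simp_all
      from dt1 dt2 have gt: "good (trans B) (final B) w t (nrm B (r t))" by (rule gN)
      have tt: "j1 + (t - j1) = t" using j2(1) t by simp
      have gt': "good (trans B) (final B) w (j1 + (t - j1)) (nrm B (r (j1 + (t - j1))))"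
        unfolding tt by (rule gt)
      obtain s where s: "j1 \<le> s" "s = j1 \<or> w (s-1) = None"
          "good (trans B) (final B) w s (nrm B (r s))"
        using run_back[OF run gt'] by blast
      have ws: "w (s - 1) = None" using s(2) wt1 t1 by auto
      have s0: "Suc (s-1) = s" using s(1) t1 by simp
      have "nrm B (r (Suc (s-1))) = init B" by (rule seg_init[OF run ws])
      then have "nrm B (r s) = init B" unfolding s0 .
      then have gs: "good (trans B) (final B) w s (init B)" using s(3) by simp
      obtain k where k: "w (s+k) = None" using good_ends[OF gs] by blast
      define k0 where "k0 = (LEAST k. w (s+k) = None)"
      have k0: "w (s+k0) = None" unfolding k0_def by (rule LeastI[of _ k]) (rule k)
      have lt: "w (s+m) \<noteq> None" if "m < k0" for m
        using that unfolding k0_def by (rule not_less_Least)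
      define u where "u = map (\<lambda>m. the (w (s+m))) [0..<k0]"
      have lu: "length u = k0" by (simp add: u_def)
      have wu: "\<forall>m<length u. w (s+m) = Some (u!m)"
      proof (intro allI impI)
        fix m assume m: "m < length u"
        then have um: "u ! m = the (w (s+m))" by (simp add: u_def lu)
        have "w (s+m) \<noteq> None" using lt m lu by simp
        then show "w (s+m) = Some (u!m)" using um by auto
      qed
      have wl: "w (s + length u) = None" using k0 lu by simp
      have setu: "set u \<subseteq> alphabet B"
      proof
        fix x assume "x \<in> set u"
        then obtain m where m: "m < length u" "x = u ! m" by (auto simp: in_set_conv_nth)
        have "w (s+m) = Some x" using wu m by simp
        then show "x \<in> alphabet B" using al[rule_format, of "s+m"] by auto
      qed
      have "reach (trans B) {init B} u \<inter> final B \<noteq> {}"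
        using good_list[OF wl wu, of "trans B" "final B" "init B"] gs by blast
      then have "u \<in> nfa_lang B" using setu by (simp add: nfa_lang_def)
      then have "u \<in> nfa_lang A" using sub by blast
      then have "reach (trans A) {init A} u \<inter> final A \<noteq> {}" by (simp add: nfa_lang_def)
      then have "good (trans A) (final A) w s (init A)"
        using good_list[OF wl wu, of "trans A" "final A" "init A"] by blast
      moreover have "s \<ge> i" using s(1) j1(1) by simp
      ultimately show "\<exists>s\<ge>i. (s = 0 \<or> w (s-1) = None) \<and> good (trans A) (final A) w s (init A)"
        using ws by blast
    qed
    then show "w \<in> nbw_lang (dollar_nbw A)" by (rule run_exists[OF assms(1) assms(3) alA])
  qed
next
  assume sub: "nbw_lang (dollar_nbw B) \<subseteq> nbw_lang (dollar_nbw A)"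
  show "nfa_lang B \<subseteq> nfa_lang A"
  proof
    fix u assume uB: "u \<in> nfa_lang B"
    hence su: "set u \<subseteq> alphabet B" and rB: "reach (trans B) {init B} u \<inter> final B \<noteq> {}"
      by (auto simp: nfa_lang_def)
    define L where "L = length u"
    define w :: "nat \<Rightarrow> 'a option" where
      "w i = (if i mod Suc L < L then Some (u ! (i mod Suc L)) else None)" for i
    have wm: "w (c * Suc L + m) = (if m < L then Some (u!m) else None)" if "m < Suc L" for c m
    proof -
      have "(c * Suc L + m) mod Suc L = m" by (simp only: mod_mult_self3) (simp add: that)
      then show ?thesis by (simp add: w_def)
    qed
    have al: "\<forall>i. w i \<in> insert None (Some ` alphabet B)"
    proof
      fix i
      show "w i \<in> insert None (Some ` alphabet B)"
      proof (cases "i mod Suc L < L")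
        case True
        then have "u ! (i mod Suc L) \<in> set u" by (simp add: L_def)
        then show ?thesis using True su by (auto simp: w_def)
      next
        case False then show ?thesis by (simp add: w_def)
      qed
    qed
    have wu: "\<forall>m<length u. w (c * Suc L + m) = Some (u!m)" for c
      using wm by (simp add: L_def)
    have wl: "w (c * Suc L + length u) = None" for c
      using wm[of L c] by (simp add: L_def)
    have seggood: "good (trans B) (final B) w (c * Suc L) (init B)" for c
      using good_list[OF wl[of c] wu[of c], where d="trans B" and F="final B" and q="init B"] rB by blast
    have inf: "\<forall>i. \<exists>s\<ge>i. (s = 0 \<or> w (s-1) = None) \<and> good (trans B) (final B) w s (init B)"
    proof
      fix i
      have "i \<le> i * Suc L" by simp
      moreover have "i * Suc L = 0 \<or> w (i * Suc L - 1) = None"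
      proof (cases i)
        case 0 then show ?thesis by simp
      next
        case (Suc c)
        have "i * Suc L - 1 = c * Suc L + L" using Suc by simp
        then show ?thesis using wm[of L c] by simp
      qed
      ultimately show "\<exists>s\<ge>i. (s = 0 \<or> w (s-1) = None) \<and> good (trans B) (final B) w s (init B)"
        using seggood[of i] by blast
    qed
    have "w \<in> nbw_lang (dollar_nbw B)" by (rule run_exists[OF assms(2) assms(4) al inf])
    with sub have "w \<in> nbw_lang (dollar_nbw A)" by blast
    then obtain r where r0: "r 0 = Some (init A)" and run: "\<forall>i. r (Suc i) \<in> trans_f A (r i) (w i)"
      and inf: "\<exists>\<^sub>\<infinity> i. r i = None"
      unfolding nbw_dollar by blast
    obtain j where j: "j > 0" "r j = None" using inf unfolding INFM_nat_iff by blast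
    obtain t where t: "j = Suc t" using j(1) by (cases j) auto
    have dt: "w t = None \<and> nrm A (r t) \<in> final A" using dollar_step[OF run, of t] j(2) t by simp
    define c where "c = t div Suc L"
    have tc: "t = c * Suc L + t mod Suc L" unfolding c_def by (rule div_mult_mod_eq[symmetric])
    have tlt: "t mod Suc L < Suc L" by simp
    have "w t = (if t mod Suc L < L then Some (u ! (t mod Suc L)) else None)"
      using wm[OF tlt, of c] tc by simp
    then have "\<not> t mod Suc L < L" using dt by (auto split: if_splits)
    then have "t mod Suc L = L" using tlt by linarith
    then have tL: "t = c * Suc L + length u" using tc by (simp add: L_def)
    have reachA: "nrm A (r (c * Suc L + length u)) \<in> reach (trans A) {nrm A (r (c * Suc L))} u"
      by (rule fwd[OF run wu])
    have ini: "nrm A (r (c * Suc L)) = init A"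
    proof (cases c)
      case 0 then show ?thesis using r0 by (simp add: nrm_def)
    next
      case (Suc c')
      have e: "c * Suc L = Suc (c' * Suc L + L)" using Suc by simp
      have "w (c' * Suc L + L) = None" using wm[of L c'] by simp
      from seg_init[OF run this] show ?thesis unfolding e .
    qed
    have "nrm A (r t) \<in> reach (trans A) {init A} u" using reachA ini tL by simp
    then have "reach (trans A) {init A} u \<inter> final A \<noteq> {}" using dt by blast
    moreover have "set u \<subseteq> alphabet A" using su assms(5) by simp
    ultimately show "u \<in> nfa_lang A" by (simp add: nfa_lang_def)
  qed
qed

end
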